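(* Let $p\in[1,\infty)$, $w$ a weight sequence, and let $A\subset L_{p,w}$ be bounded in $\|\cdot\|_{p,w}$ and equinormed with respect to $\{\|\cdot\|_{p,w,i}\}_{i\in\mathbb{N}}$. Then $$\forall\varepsilon>0\ \exists N\in\mathbb{N}\ \forall a\in A\ \forall i\ge N:\ \|(a_{i+1},a_{i+2},\dots)\|_{p,w}^p<\varepsilon.$$
   Context: A weight sequence is a sequence $w=(w_i)$ of positive reals with $w_1=1\ge w_2\ge\dots$, $w_i\to0$, and $\sum_i w_i=+\infty$. For a real sequence $a$, $\|a\|_{p,w}=\sup_{\sigma}\big(\sum_{i=1}^\infty |a_{\sigma_i}|^p w_i\big)^{1/p}$ over all permutations $\sigma$ of $\mathbb{N}$; $L_{p,w}$ is the set of real sequences with finite norm. $\|a\|_{p,w,i}=\|(a_1,\dots,a_i,0,0,\dots)\|_{p,w}$. $A$ is equinormed if $\forall\varepsilon>0\ \exists i\ \forall a\in A:\ \|a\|_{p,w}\le\|a\|_{p,w,i}+\varepsilon$. *)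

theory Defs
  imports "HOL-Analysis.Analysis"
begin

text \<open>Sequences are indexed from 0: the paper's a_1, a_2, ... is a 0, a 1, ...\<close>

definition weight_seq :: "(nat \<Rightarrow> real) \<Rightarrow> bool" where
  "weight_seq w \<longleftrightarrow> (\<forall>i. w i > 0) \<and> w 0 = 1 \<and> decseq w \<and> w \<longlonglongrightarrow> 0
     \<and> \<not> summable w"

definition lpw_pow :: "real \<Rightarrow> (nat \<Rightarrow> real) \<Rightarrow> (nat \<Rightarrow> real) \<Rightarrow> ennreal" where
  "lpw_pow p w a = (SUP \<sigma>\<in>{\<sigma>. bij \<sigma>}. (\<Sum>i. ennreal (\<bar>a (\<sigma> i)\<bar> powr p * w i)))"

definition Lpw :: "real \<Rightarrow> (nat \<Rightarrow> real) \<Rightarrow> (nat \<Rightarrow> real) set" where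
  "Lpw p w = {a. lpw_pow p w a < \<infinity>}"

definition lpw_norm :: "real \<Rightarrow> (nat \<Rightarrow> real) \<Rightarrow> (nat \<Rightarrow> real) \<Rightarrow> real" where
  "lpw_norm p w a = enn2real (lpw_pow p w a) powr (1 / p)"

definition trunc_seq :: "nat \<Rightarrow> (nat \<Rightarrow> real) \<Rightarrow> nat \<Rightarrow> real" where
  "trunc_seq i a = (\<lambda>k. if k < i then a k else 0)"

definition lpw_norm_i :: "real \<Rightarrow> (nat \<Rightarrow> real) \<Rightarrow> nat \<Rightarrow> (nat \<Rightarrow> real) \<Rightarrow> real" where
  "lpw_norm_i p w i a = lpw_norm p w (trunc_seq i a)"

definition equinormed :: "real \<Rightarrow> (nat \<Rightarrow> real) \<Rightarrow> (nat \<Rightarrow> real) set \<Rightarrow> bool" where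
  "equinormed p w A \<longleftrightarrow>
     (\<forall>\<epsilon>>0. \<exists>i. \<forall>a\<in>A. lpw_norm p w a \<le> lpw_norm_i p w i a + \<epsilon>)"

text \<open>Tail (a_{i+1}, a_{i+2}, ...) in 1-based indexing.\<close>
definition tail_seq :: "nat \<Rightarrow> (nat \<Rightarrow> real) \<Rightarrow> nat \<Rightarrow> real" where
  "tail_seq i a = (\<lambda>k. a (k + i))"

end

theory Submission
  imports Defs
begin

definition Wf :: "(nat \<Rightarrow> real) \<Rightarrow> nat \<Rightarrow> real" where
  "Wf w n = (\<Sum>k<n. w k)"

lemma set_sum_le:
  fixes w :: "nat \<Rightarrow> real"
  assumes "decseq w" "finite J"
  shows "(\<Sum>k\<in>J. w k) \<le> Wf w (card J)"
  using assms(2)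
proof (induction "card J" arbitrary: J)
  case 0
  then show ?case by (simp add: Wf_def)
next
  case (Suc n)
  then have ne: "J \<noteq> {}" by auto
  define m where "m = Max J"
  have mJ: "m \<in> J" using Suc ne m_def by auto
  have c: "card (J - {m}) = n" using Suc mJ by auto
  have IH: "(\<Sum>k\<in>J - {m}. w k) \<le> Wf w n" using Suc c by (metis finite_Diff)
  have "J \<subseteq> {..m}" using Suc m_def by auto
  then have "card J \<le> Suc m" using card_mono[of "{..m}" J] by auto
  then have "n \<le> m" using Suc by simp
  then have wm: "w m \<le> w n" using assms(1) by (simp add: decseq_def)
  have "(\<Sum>k\<in>J. w k) = (\<Sum>k\<in>J - {m}. w k) + w m"
    using Suc mJ by (metis add.commute sum.remove)
  also have "\<dots> \<le> Wf w n + w n" using IH wm by simp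
  also have "\<dots> = Wf w (card J)" using Suc(2)[symmetric] by (simp add: Wf_def)
  finally show ?case .
qed

lemma inf_compl: "infinite (- set (ys::nat list))"
  using Diff_infinite_finite[OF finite_set[of ys] infinite_UNIV_nat] by (simp add: Compl_eq_Diff_UNIV)

lemma extend_bij:
  fixes ys :: "nat list"
  assumes "distinct ys"
  shows "\<exists>\<sigma>. bij \<sigma> \<and> (\<forall>j<length ys. \<sigma> j = ys!j)"
proof -
  define T where "T = set ys"
  define m where "m = length ys"
  have inf: "infinite (- T)" unfolding T_def by (rule inf_compl)
  define e where "e = enumerate (- T)"
  have eb: "bij_betw e UNIV (- T)" unfolding e_def using bij_enumerate[OF inf] .
  then have einj: "inj e" by (simp add: bij_betw_def)
  have eT: "e k \<notin> T" for k using eb by (auto simp: bij_betw_def)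
  have yT: "j < m \<Longrightarrow> ys!j \<in> T" for j unfolding T_def m_def by simp
  define \<sigma> where "\<sigma> = (\<lambda>j. if j < m then ys!j else e (j - m))"
  have "inj \<sigma>"
  proof (rule injI)
    fix x y assume ee: "\<sigma> x = \<sigma> y"
    show "x = y"
    proof (cases "x < m")
      case True
      show ?thesis
      proof (cases "y < m")
        case True
        then show ?thesis using ee \<open>x < m\<close> assms unfolding \<sigma>_def m_def
          by (simp add: nth_eq_iff_index_eq)
      next
        case False
        then show ?thesis using ee \<open>x < m\<close> yT eT unfolding \<sigma>_def by metis
      qed
    next
      case False
      show ?thesis
      proof (cases "y < m")
        case True
        then show ?thesis using ee \<open>\<not> x < m\<close> yT eT unfolding \<sigma>_def by metis
      next
        case False
        then have "e (x - m) = e (y - m)" using ee \<open>\<not> x < m\<close> unfolding \<sigma>_def by simp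
        then have "x - m = y - m" using einj by (simp add: inj_eq)
        then show ?thesis using \<open>\<not> x < m\<close> False by simp
      qed
    qed
  qed
  moreover have "surj \<sigma>"
  proof -
    have "y \<in> range \<sigma>" for y
    proof (cases "y \<in> T")
      case True
      then obtain j where j: "j < m" "ys!j = y" unfolding T_def m_def by (auto simp: in_set_conv_nth)
      then have "\<sigma> j = y" unfolding \<sigma>_def by simp
      then show ?thesis by (metis rangeI)
    next
      case False
      then have "y \<in> e ` UNIV" using eb by (simp add: bij_betw_def)
      then obtain k where "e k = y" by blast
      then have "\<sigma> (k + m) = y" unfolding \<sigma>_def by simp
      then show ?thesis by (metis rangeI)
    qed
    then show ?thesis by auto
  qed
  ultimately have "bij \<sigma>" by (simp add: bij_def)
  moreover have "\<forall>j<length ys. \<sigma> j = ys!j" unfolding \<sigma>_def m_def by simp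
  ultimately show ?thesis by blast
qed

lemma list_le:
  assumes "distinct ys"
  shows "(\<Sum>j<length ys. ennreal (\<bar>a (ys!j)\<bar> powr p * w j)) \<le> lpw_pow p w a"
proof -
  obtain \<sigma> where s: "bij \<sigma>" "\<forall>j<length ys. \<sigma> j = ys!j" using extend_bij[OF assms] by blast
  have "(\<Sum>j<length ys. ennreal (\<bar>a (ys!j)\<bar> powr p * w j)) = (\<Sum>j<length ys. ennreal (\<bar>a (\<sigma> j)\<bar> powr p * w j))"
    using s(2) by (intro sum.cong) auto
  also have "\<dots> \<le> (\<Sum>j. ennreal (\<bar>a (\<sigma> j)\<bar> powr p * w j))"
    by (rule sum_le_suminf) auto
  also have "\<dots> \<le> lpw_pow p w a" unfolding lpw_pow_def using s(1)
    by (intro SUP_upper) auto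
  finally show ?thesis .
qed

lemma Wf_mono:
  assumes "\<forall>i. 0 \<le> w i" "m \<le> n"
  shows "Wf w m \<le> Wf w n"
  unfolding Wf_def using assms by (intro sum_mono2) auto

definition Iq :: "real \<Rightarrow> (nat \<Rightarrow> real) \<Rightarrow> (nat \<Rightarrow> real) \<Rightarrow> real \<Rightarrow> ennreal" where
  "Iq p w a x = (SUP n. ennreal (Wf w (card {k. k < n \<and> x < \<bar>a k\<bar> powr p}))) * indicator {0<..} x"

definition Gq :: "real \<Rightarrow> (nat \<Rightarrow> real) \<Rightarrow> (nat \<Rightarrow> real) \<Rightarrow> ennreal" where
  "Gq p w a = (\<integral>\<^sup>+x. Iq p w a x \<partial>lborel)"

lemma fin_lt[simp]: "finite {k::nat. k < n \<and> P k}"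
  by (rule finite_subset[of _ "{..<n}"]) auto

lemma meas_fn:
  fixes a :: "nat \<Rightarrow> real"
  assumes "\<forall>i. 0 \<le> w i"
  shows "(\<lambda>x::real. ennreal (Wf w (card {k. k < n \<and> x < \<bar>a k\<bar> powr p}))) \<in> borel_measurable lborel"
proof -
  define f where "f = (\<lambda>x::real. Wf w (card {k. k < n \<and> x < \<bar>a k\<bar> powr p}))"
  have "mono (\<lambda>x. - f x)"
  proof (rule monoI)
    fix x y :: real assume "x \<le> y"
    then have "card {k. k < n \<and> y < \<bar>a k\<bar> powr p} \<le> card {k. k < n \<and> x < \<bar>a k\<bar> powr p}"
      by (intro card_mono fin_lt) auto
    then show "- f x \<le> - f y" unfolding f_def using Wf_mono[OF assms] by simp
  qed
  then have "(\<lambda>x. - f x) \<in> borel_measurable borel" by (rule borel_measurable_mono)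
  then have "f \<in> borel_measurable borel" by (simp only: borel_measurable_uminus_eq)
  then have "(\<lambda>x. ennreal (f x)) \<in> borel_measurable borel"
    using measurable_compose[OF _ measurable_ennreal] by blast
  then show ?thesis unfolding f_def by simp
qed

lemma meas_Iq:
  assumes "\<forall>i. 0 \<le> w i"
  shows "Iq p w a \<in> borel_measurable lborel"
  unfolding Iq_def using meas_fn[OF assms] by measurable

lemma ind_integral:
  assumes "0 \<le> c" "0 \<le> u"
  shows "(\<integral>\<^sup>+x. ennreal c * indicator {0<..<u} x \<partial>lborel) = ennreal (u * c)"
  using assms by (simp add: nn_integral_cmult_indicator ennreal_mult'' mult.commute)

lemma upper:
  assumes w0: "\<forall>i. 0 \<le> w i" and wd: "decseq w"
  shows "lpw_pow p w a \<le> Gq p w a"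
  unfolding lpw_pow_def
proof (rule SUP_least)
  fix \<sigma> :: "nat \<Rightarrow> nat" assume "\<sigma> \<in> {\<sigma>. bij \<sigma>}"
  then have bs: "bij \<sigma>" by simp
  then have injs: "inj \<sigma>" by (simp add: bij_is_inj)
  show "(\<Sum>i. ennreal (\<bar>a (\<sigma> i)\<bar> powr p * w i)) \<le> Gq p w a"
    unfolding suminf_eq_SUP
  proof (rule SUP_least)
    fix K
    define v where "v = (\<lambda>i. \<bar>a (\<sigma> i)\<bar> powr p)"
    have "(\<Sum>i<K. ennreal (\<bar>a (\<sigma> i)\<bar> powr p * w i)) =
          (\<Sum>i<K. \<integral>\<^sup>+x. ennreal (w i) * indicator {0<..<v i} x \<partial>lborel)"
      using w0 by (intro sum.cong refl) (simp add: ind_integral v_def)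
    also have "\<dots> = (\<integral>\<^sup>+x. (\<Sum>i<K. ennreal (w i) * indicator {0<..<v i} x) \<partial>lborel)"
      by (rule nn_integral_sum[symmetric]) measurable
    also have "\<dots> \<le> Gq p w a" unfolding Gq_def
    proof (rule nn_integral_mono)
      fix x :: real
      show "(\<Sum>i<K. ennreal (w i) * indicator {0<..<v i} x) \<le> Iq p w a x"
      proof (cases "0 < x")
        case False
        then show ?thesis by (simp add: indicator_def)
      next
        case True
        define J where "J = {i\<in>{..<K}. x < v i}"
        have fJ: "finite J" unfolding J_def by simp
        have "(\<Sum>i<K. ennreal (w i) * indicator {0<..<v i} x) = (\<Sum>i\<in>J. ennreal (w i))"
        proof -
          have "(\<Sum>i<K. ennreal (w i) * indicator {0<..<v i} x) = (\<Sum>i<K. if x < v i then ennreal (w i) else 0)"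
            using True by (intro sum.cong) (auto simp: indicator_def)
          also have "\<dots> = (\<Sum>i\<in>J. ennreal (w i))" unfolding J_def
            by (rule sum.inter_filter[symmetric]) simp
          finally show ?thesis .
        qed
        also have "\<dots> = ennreal (\<Sum>i\<in>J. w i)" using w0 by (simp add: sum_ennreal)
        also have "\<dots> \<le> ennreal (Wf w (card J))" using set_sum_le[OF wd fJ] by (simp add: ennreal_leI)
        also have "\<dots> \<le> ennreal (Wf w (card {k. k < Suc (Max (\<sigma> ` {..<K})) \<and> x < \<bar>a k\<bar> powr p}))"
        proof -
          have "\<sigma> ` J \<subseteq> {k. k < Suc (Max (\<sigma> ` {..<K})) \<and> x < \<bar>a k\<bar> powr p}"
            unfolding J_def v_def by (auto simp: le_imp_less_Suc)
          then have "card (\<sigma> ` J) \<le> card {k. k < Suc (Max (\<sigma> ` {..<K})) \<and> x < \<bar>a k\<bar> powr p}"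
            by (intro card_mono fin_lt)
          moreover have "card (\<sigma> ` J) = card J" using injs by (simp add: card_image inj_on_subset)
          ultimately show ?thesis using Wf_mono[OF w0] by (simp add: ennreal_leI)
        qed
        also have "\<dots> \<le> (SUP n. ennreal (Wf w (card {k. k < n \<and> x < \<bar>a k\<bar> powr p})))"
          by (rule SUP_upper) simp
        also have "\<dots> = Iq p w a x" unfolding Iq_def using True by simp
        finally show ?thesis .
      qed
    qed
    finally show "(\<Sum>i<K. ennreal (\<bar>a (\<sigma> i)\<bar> powr p * w i)) \<le> Gq p w a" .
  qed
qed


lemma down_closed:
  fixes J :: "nat set"
  assumes "finite J" "\<forall>j\<in>J. \<forall>i\<le>j. i \<in> J"
  shows "J = {..<card J}"
proof (cases "J = {}")
  case True
  then show ?thesis by simp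
next
  case False
  define m where "m = Max J"
  have "J = {..m}"
  proof
    show "J \<subseteq> {..m}" using assms(1) m_def by auto
    show "{..m} \<subseteq> J" using assms(2) Max_in[OF assms(1) False] m_def by auto
  qed
  then show ?thesis by (simp add: lessThan_Suc_atMost)
qed

lemma lower:
  fixes a :: "nat \<Rightarrow> real"
  assumes w0: "\<forall>i. 0 \<le> w i"
  shows "Gq p w a \<le> lpw_pow p w a"
proof -
  define f where "f = (\<lambda>n x. ennreal (Wf w (card {k. k < n \<and> x < \<bar>a k\<bar> powr p})) * indicator {0<..} x)"
  have Iq_eq: "Iq p w a x = (SUP n. f n x)" for x
    unfolding Iq_def f_def by (simp add: SUP_mult_right_ennreal)
  have inc: "incseq f"
  proof (rule incseq_SucI, rule le_funI)
    fix n x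
    have "card {k. k < n \<and> x < \<bar>a k\<bar> powr p} \<le> card {k. k < Suc n \<and> x < \<bar>a k\<bar> powr p}"
      by (intro card_mono fin_lt) auto
    then have "ennreal (Wf w (card {k. k < n \<and> x < \<bar>a k\<bar> powr p})) \<le> ennreal (Wf w (card {k. k < Suc n \<and> x < \<bar>a k\<bar> powr p}))"
      using Wf_mono[OF w0] by (simp add: ennreal_leI)
    then show "f n x \<le> f (Suc n) x" unfolding f_def by (rule mult_right_mono) simp
  qed
  have meas: "f n \<in> borel_measurable lborel" for n
    unfolding f_def using meas_fn[OF w0, of n a p] by measurable
  have "Gq p w a = (\<integral>\<^sup>+x. (SUP n. f n x) \<partial>lborel)" unfolding Gq_def Iq_eq ..
  also have "\<dots> = (SUP n. integral\<^sup>N lborel (f n))"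
    by (rule nn_integral_monotone_convergence_SUP[OF inc meas])
  also have "\<dots> \<le> lpw_pow p w a"
  proof (rule SUP_least)
    fix n
    define ys where "ys = sort_key (\<lambda>k. - (\<bar>a k\<bar> powr p)) [0..<n]"
    define u where "u = (\<lambda>j. \<bar>a (ys!j)\<bar> powr p)"
    have dys: "distinct ys" and lys: "length ys = n" and sys: "set ys = {..<n}"
      unfolding ys_def by auto
    have srt: "sorted (map (\<lambda>k. - (\<bar>a k\<bar> powr p)) ys)" unfolding ys_def by simp
    have um: "u j' \<le> u j" if "j \<le> j'" "j' < n" for j j'
    proof -
      have "(map (\<lambda>k. - (\<bar>a k\<bar> powr p)) ys)!j \<le> (map (\<lambda>k. - (\<bar>a k\<bar> powr p)) ys)!j'"
        using sorted_nth_mono[OF srt that(1)] that(2) lys by simp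
      then show ?thesis using that lys unfolding u_def by simp
    qed
    have pw: "f n x \<le> (\<Sum>j<n. ennreal (w j) * indicator {0<..<u j} x)" for x
    proof (cases "0 < x")
      case False
      then show ?thesis unfolding f_def by simp
    next
      case True
      define J where "J = {j\<in>{..<n}. x < u j}"
      have fJ: "finite J" unfolding J_def by simp
      have img: "{k. k < n \<and> x < \<bar>a k\<bar> powr p} = (\<lambda>j. ys!j) ` J"
      proof
        show "{k. k < n \<and> x < \<bar>a k\<bar> powr p} \<subseteq> (\<lambda>j. ys!j) ` J"
        proof
          fix k assume k: "k \<in> {k. k < n \<and> x < \<bar>a k\<bar> powr p}"
          then have "k \<in> set ys" using sys by auto
          then obtain j where "j < n" "ys!j = k" using lys by (auto simp: in_set_conv_nth)
          then show "k \<in> (\<lambda>j. ys!j) ` J" using k unfolding J_def u_def by auto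
        qed
        show "(\<lambda>j. ys!j) ` J \<subseteq> {k. k < n \<and> x < \<bar>a k\<bar> powr p}"
        proof
          fix k assume "k \<in> (\<lambda>j. ys!j) ` J"
          then obtain j where j: "j \<in> J" "k = ys!j" by blast
          then have "k \<in> set ys" using lys unfolding J_def by auto
          then show "k \<in> {k. k < n \<and> x < \<bar>a k\<bar> powr p}" using sys j unfolding J_def u_def by auto
        qed
      qed
      have injJ: "inj_on (\<lambda>j. ys!j) J"
        using inj_on_nth[OF dys, of J] lys unfolding J_def by auto
      have cJ: "card {k. k < n \<and> x < \<bar>a k\<bar> powr p} = card J"
        unfolding img using card_image[OF injJ] .
      have dc: "J = {..<card J}"
      proof (rule down_closed[OF fJ], intro ballI allI impI)
        fix j i assume "j \<in> J" "i \<le> j"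
        then show "i \<in> J" unfolding J_def using um[of i j] by auto
      qed
      have "Wf w (card J) = (\<Sum>j\<in>J. w j)" unfolding Wf_def using dc by simp
      also have "\<dots> = (\<Sum>j<n. if x < u j then w j else 0)" unfolding J_def
        by (rule sum.inter_filter) simp
      finally have eqW: "Wf w (card J) = (\<Sum>j<n. if x < u j then w j else 0)" .
      have "f n x = ennreal (\<Sum>j<n. if x < u j then w j else 0)"
        unfolding f_def using True cJ eqW by simp
      also have "\<dots> = (\<Sum>j<n. ennreal (if x < u j then w j else 0))"
        using w0 by (intro sum_ennreal[symmetric]) auto
      also have "\<dots> = (\<Sum>j<n. ennreal (w j) * indicator {0<..<u j} x)"
        using True by (intro sum.cong) (auto simp: indicator_def)
      finally show ?thesis by simp
    qed
    have "integral\<^sup>N lborel (f n) \<le> (\<integral>\<^sup>+x. (\<Sum>j<n. ennreal (w j) * indicator {0<..<u j} x) \<partial>lborel)"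
      by (rule nn_integral_mono) (rule pw)
    also have "\<dots> = (\<Sum>j<n. \<integral>\<^sup>+x. ennreal (w j) * indicator {0<..<u j} x \<partial>lborel)"
      by (rule nn_integral_sum) measurable
    also have "\<dots> = (\<Sum>j<n. ennreal (\<bar>a (ys!j)\<bar> powr p * w j))"
      using w0 by (intro sum.cong refl) (simp add: ind_integral u_def)
    also have "\<dots> \<le> lpw_pow p w a" using list_le[OF dys, of a p w] lys by simp
    finally show "integral\<^sup>N lborel (f n) \<le> lpw_pow p w a" .
  qed
  finally show ?thesis .
qed

lemma Wf_unbounded:
  assumes "\<forall>i. 0 \<le> w i" "\<not> summable w"
  shows "\<exists>M. B < Wf w M"
proof (rule ccontr)
  assume "\<not> (\<exists>M. B < Wf w M)"
  then have "\<And>n. (\<Sum>i<n. w i) \<le> B" by (auto simp: Wf_def not_less)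
  then have "summable w" using assms(1) by (intro summableI_nonneg_bounded) auto
  then show False using assms(2) by simp
qed

lemma Wf_nonneg: "\<forall>i. 0 \<le> w i \<Longrightarrow> 0 \<le> Wf w n"
  unfolding Wf_def by (simp add: sum_nonneg)

lemma level_list:
  fixes a :: "nat \<Rightarrow> real"
  assumes w0: "\<forall>i. 0 \<le> w i" and lp: "0 \<le> l"
  shows "ennreal (l * Wf w (card {k. k < n \<and> l < \<bar>a k\<bar> powr p})) \<le> lpw_pow p w a"
proof -
  define ys where "ys = filter (\<lambda>k. l < \<bar>a k\<bar> powr p) [0..<n]"
  have dys: "distinct ys" unfolding ys_def by simp
  have sys: "set ys = {k. k < n \<and> l < \<bar>a k\<bar> powr p}" unfolding ys_def by auto
  have len: "length ys = card {k. k < n \<and> l < \<bar>a k\<bar> powr p}"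
    using distinct_card[OF dys] sys by simp
  have "ennreal (l * Wf w (length ys)) = (\<Sum>j<length ys. ennreal (l * w j))"
    unfolding Wf_def using w0 lp by (simp add: sum_distrib_left sum_ennreal)
  also have "\<dots> \<le> (\<Sum>j<length ys. ennreal (\<bar>a (ys!j)\<bar> powr p * w j))"
  proof (rule sum_mono)
    fix j assume "j \<in> {..<length ys}"
    then have "ys!j \<in> set ys" by simp
    then have "l < \<bar>a (ys!j)\<bar> powr p" using sys by auto
    then show "ennreal (l * w j) \<le> ennreal (\<bar>a (ys!j)\<bar> powr p * w j)"
      using w0 by (intro ennreal_leI mult_right_mono) auto
  qed
  also have "\<dots> \<le> lpw_pow p w a" by (rule list_le[OF dys])
  finally show ?thesis using len by simp
qed

lemma level_bound:
  fixes a :: "nat \<Rightarrow> real"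
  assumes w0: "\<forall>i. 0 \<le> w i" and lp: "0 < l" and PB: "lpw_pow p w a \<le> ennreal B" and B0: "0 \<le> B"
    and M: "B < l * Wf w (Suc M)"
  shows "finite {k. l < \<bar>a k\<bar> powr p} \<and> card {k. l < \<bar>a k\<bar> powr p} \<le> M"
proof -
  have cb: "card {k. k < n \<and> l < \<bar>a k\<bar> powr p} \<le> M" for n
  proof (rule ccontr)
    assume "\<not> ?thesis"
    then have "Suc M \<le> card {k. k < n \<and> l < \<bar>a k\<bar> powr p}" by simp
    then have "l * Wf w (Suc M) \<le> l * Wf w (card {k. k < n \<and> l < \<bar>a k\<bar> powr p})"
      using Wf_mono[OF w0] lp by (intro mult_left_mono) auto
    then have "ennreal (l * Wf w (Suc M)) \<le> ennreal (l * Wf w (card {k. k < n \<and> l < \<bar>a k\<bar> powr p}))"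
      by (rule ennreal_leI)
    also have "\<dots> \<le> lpw_pow p w a" using level_list[OF w0, of l n a p] lp by simp
    also have "\<dots> \<le> ennreal B" by (rule PB)
    finally have "l * Wf w (Suc M) \<le> B" using B0 by simp
    then show False using M by simp
  qed
  define S where "S = {k. l < \<bar>a k\<bar> powr p}"
  have fS: "finite S"
  proof (rule ccontr)
    assume "infinite S"
    then obtain T where T: "finite T" "card T = Suc M" "T \<subseteq> S"
      using infinite_arbitrarily_large by blast
    have "T \<noteq> {}" using T by auto
    define n where "n = Suc (Max T)"
    have "T \<subseteq> {k. k < n \<and> l < \<bar>a k\<bar> powr p}"
      using T unfolding n_def S_def by (auto simp: le_imp_less_Suc)
    then have "Suc M \<le> card {k. k < n \<and> l < \<bar>a k\<bar> powr p}"
      using T card_mono[OF fin_lt] by metis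
    then show False using cb[of n] by simp
  qed
  have "card S \<le> M"
  proof -
    have "S \<subseteq> {k. k < Suc (Max S) \<and> l < \<bar>a k\<bar> powr p}"
      using fS unfolding S_def by (auto simp: le_imp_less_Suc)
    then have "card S \<le> card {k. k < Suc (Max S) \<and> l < \<bar>a k\<bar> powr p}"
      by (intro card_mono fin_lt)
    then show ?thesis using cb[of "Suc (Max S)"] by simp
  qed
  then show ?thesis using fS unfolding S_def by simp
qed

lemma Iq_fin:
  fixes b :: "nat \<Rightarrow> real"
  assumes w0: "\<forall>i. 0 \<le> w i" and x: "0 < x" and fin: "finite {k. x < \<bar>b k\<bar> powr p}"
  shows "Iq p w b x = ennreal (Wf w (card {k. x < \<bar>b k\<bar> powr p}))"
proof -
  define S where "S = {k. x < \<bar>b k\<bar> powr p}"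
  have le: "ennreal (Wf w (card {k. k < n \<and> x < \<bar>b k\<bar> powr p})) \<le> ennreal (Wf w (card S))" for n
  proof -
    have "card {k. k < n \<and> x < \<bar>b k\<bar> powr p} \<le> card S"
      using fin unfolding S_def by (intro card_mono) auto
    then show ?thesis using Wf_mono[OF w0] by (simp add: ennreal_leI)
  qed
  define n0 where "n0 = (if S = {} then 0 else Suc (Max S))"
  have "{k. k < n0 \<and> x < \<bar>b k\<bar> powr p} = S"
    using fin unfolding S_def n0_def by (auto simp: le_imp_less_Suc)
  then have "ennreal (Wf w (card S)) \<le> (SUP n. ennreal (Wf w (card {k. k < n \<and> x < \<bar>b k\<bar> powr p})))"
    by (metis (no_types, lifting) SUP_upper UNIV_I)
  moreover have "(SUP n. ennreal (Wf w (card {k. k < n \<and> x < \<bar>b k\<bar> powr p}))) \<le> ennreal (Wf w (card S))"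
    using le by (intro SUP_least) auto
  ultimately show ?thesis unfolding Iq_def S_def using x by (simp add: antisym)
qed

lemma Iq_mono:
  fixes a b :: "nat \<Rightarrow> real"
  assumes w0: "\<forall>i. 0 \<le> w i" and p: "0 \<le> p" and ab: "\<forall>k. \<bar>b k\<bar> \<le> \<bar>a k\<bar>"
  shows "Iq p w b x \<le> Iq p w a x"
proof -
  have "ennreal (Wf w (card {k. k < n \<and> x < \<bar>b k\<bar> powr p})) \<le> ennreal (Wf w (card {k. k < n \<and> x < \<bar>a k\<bar> powr p}))" for n
  proof -
    have "{k. k < n \<and> x < \<bar>b k\<bar> powr p} \<subseteq> {k. k < n \<and> x < \<bar>a k\<bar> powr p}"
    proof (intro subsetI)
      fix k assume k: "k \<in> {k. k < n \<and> x < \<bar>b k\<bar> powr p}"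
      have "\<bar>b k\<bar> powr p \<le> \<bar>a k\<bar> powr p" using ab p by (simp add: powr_mono2)
      then show "k \<in> {k. k < n \<and> x < \<bar>a k\<bar> powr p}" using k by auto
    qed
    then have "card {k. k < n \<and> x < \<bar>b k\<bar> powr p} \<le> card {k. k < n \<and> x < \<bar>a k\<bar> powr p}"
      by (intro card_mono fin_lt)
    then show ?thesis using Wf_mono[OF w0] by (simp add: ennreal_leI)
  qed
  then have "(SUP n. ennreal (Wf w (card {k. k < n \<and> x < \<bar>b k\<bar> powr p}))) \<le> (SUP n. ennreal (Wf w (card {k. k < n \<and> x < \<bar>a k\<bar> powr p})))"
    by (intro SUP_mono) auto
  then show ?thesis unfolding Iq_def by (rule mult_right_mono) simp
qed

lemma lpw_mono:
  fixes a b :: "nat \<Rightarrow> real"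
  assumes w0: "\<forall>i. 0 \<le> w i" and p: "0 \<le> p" and ab: "\<forall>k. \<bar>b k\<bar> \<le> \<bar>a k\<bar>"
  shows "lpw_pow p w b \<le> lpw_pow p w a"
  unfolding lpw_pow_def
proof (rule SUP_mono)
  fix \<sigma> :: "nat \<Rightarrow> nat" assume "\<sigma> \<in> {\<sigma>. bij \<sigma>}"
  moreover have "(\<Sum>i. ennreal (\<bar>b (\<sigma> i)\<bar> powr p * w i)) \<le> (\<Sum>i. ennreal (\<bar>a (\<sigma> i)\<bar> powr p * w i))"
    using ab p w0 by (intro suminf_le ennreal_leI mult_right_mono powr_mono2) auto
  ultimately show "\<exists>\<tau>\<in>{\<sigma>. bij \<sigma>}. (\<Sum>i. ennreal (\<bar>b (\<sigma> i)\<bar> powr p * w i)) \<le> (\<Sum>i. ennreal (\<bar>a (\<tau> i)\<bar> powr p * w i))"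
    by blast
qed

lemma Wf_add: "Wf w (m + t) = Wf w m + (\<Sum>k<t. w (m + k))"
  by (induction t) (auto simp: Wf_def)


lemma norm_pow:
  assumes "0 < p"
  shows "lpw_norm p w a powr p = enn2real (lpw_pow p w a)"
  unfolding lpw_norm_def using assms by (simp add: powr_powr powr_one)

lemma trunc_le: "\<forall>k. \<bar>trunc_seq i a k\<bar> \<le> \<bar>a k\<bar>"
  unfolding trunc_seq_def by auto

lemma equi_pow:
  assumes p: "1 \<le> p" and w0: "\<forall>i. 0 \<le> w i" and AL: "A \<subseteq> Lpw p w"
    and bd: "\<forall>a\<in>A. lpw_norm p w a \<le> C" and eq: "equinormed p w A" and eta: "0 < \<eta>"
  shows "\<exists>i. \<forall>a\<in>A. lpw_pow p w a \<le> lpw_pow p w (trunc_seq i a) + ennreal \<eta>"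
proof -
  have p0: "0 < p" using p by simp
  define C' where "C' = max C 0"
  define S where "S = {0..C'+1}"
  have "continuous_on S (\<lambda>y::real. y powr p)"
    unfolding S_def using p0 by (intro continuous_on_powr') (auto intro: continuous_intros)
  then have "uniformly_continuous_on S (\<lambda>y::real. y powr p)"
    unfolding S_def by (rule compact_uniformly_continuous[OF _ compact_Icc])
  then obtain d where d: "0 < d" and dp: "\<And>x x'. x \<in> S \<Longrightarrow> x' \<in> S \<Longrightarrow> dist x' x < d \<Longrightarrow> dist (x' powr p) (x powr p) < \<eta>"
    unfolding uniformly_continuous_on_def using eta by metis
  define \<delta> where "\<delta> = min (d/2) 1"
  have \<delta>0: "0 < \<delta>" using d \<delta>_def by simp
  obtain i where i: "\<forall>a\<in>A. lpw_norm p w a \<le> lpw_norm_i p w i a + \<delta>"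
    using eq \<delta>0 unfolding equinormed_def by blast
  have "\<forall>a\<in>A. lpw_pow p w a \<le> lpw_pow p w (trunc_seq i a) + ennreal \<eta>"
  proof
    fix a assume aA: "a \<in> A"
    define x where "x = lpw_norm p w a"
    define y where "y = lpw_norm_i p w i a"
    have fin: "lpw_pow p w a < \<infinity>" using aA AL unfolding Lpw_def by auto
    have hle: "lpw_pow p w (trunc_seq i a) \<le> lpw_pow p w a"
      by (rule lpw_mono[OF w0 _ trunc_le]) (use p in simp)
    have finh: "lpw_pow p w (trunc_seq i a) < \<infinity>" using hle fin by simp
    have "enn2real (lpw_pow p w (trunc_seq i a)) \<le> enn2real (lpw_pow p w a)"
      using hle fin by (intro enn2real_mono) auto
    then have yx: "y \<le> x" unfolding x_def y_def lpw_norm_i_def lpw_norm_def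
      using p0 by (intro powr_mono2) auto
    have y0: "0 \<le> y" unfolding y_def lpw_norm_i_def lpw_norm_def by simp
    have xC: "x \<le> C'" using bd aA unfolding x_def C'_def by fastforce
    have xS: "x \<in> S" and yS: "y \<in> S" using yx y0 xC unfolding S_def by auto
    have "x \<le> y + \<delta>" using i aA unfolding x_def y_def by blast
    then have "dist x y < d" using yx \<delta>_def d by (simp add: dist_real_def)
    then have "dist (x powr p) (y powr p) < \<eta>" using dp[OF yS xS] by simp
    then have "x powr p < y powr p + \<eta>" by (simp add: dist_real_def)
    then have lt: "enn2real (lpw_pow p w a) < enn2real (lpw_pow p w (trunc_seq i a)) + \<eta>"
      unfolding x_def y_def lpw_norm_i_def norm_pow[OF p0] .
    have "lpw_pow p w a = ennreal (enn2real (lpw_pow p w a))" using fin by simp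
    also have "\<dots> \<le> ennreal (enn2real (lpw_pow p w (trunc_seq i a)) + \<eta>)"
      using lt by (intro ennreal_leI) simp
    also have "\<dots> = ennreal (enn2real (lpw_pow p w (trunc_seq i a))) + ennreal \<eta>"
      using eta by (intro ennreal_plus) auto
    also have "\<dots> = lpw_pow p w (trunc_seq i a) + ennreal \<eta>" using finh by simp
    finally show "lpw_pow p w a \<le> lpw_pow p w (trunc_seq i a) + ennreal \<eta>" .
  qed
  then show ?thesis by blast
qed


lemma GP:
  assumes "\<forall>i. 0 \<le> w i" "decseq w"
  shows "Gq p w b = lpw_pow p w b"
  using upper[OF assms] lower[OF assms(1)] by (rule antisym[rotated])

lemma gap_int:
  fixes b h :: "nat \<Rightarrow> real"
  assumes w0: "\<forall>i. 0 \<le> w i" and wd: "decseq w" and p: "0 \<le> p"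
    and hb: "\<forall>k. \<bar>h k\<bar> \<le> \<bar>b k\<bar>"
    and le: "lpw_pow p w b \<le> lpw_pow p w h + ennreal \<eta>" and fin: "lpw_pow p w b < \<infinity>"
  shows "(\<integral>\<^sup>+x. (Iq p w b x - Iq p w h x) \<partial>lborel) \<le> ennreal \<eta>"
proof -
  have split: "Iq p w b x = Iq p w h x + (Iq p w b x - Iq p w h x)" for x
    using Iq_mono[OF w0 p hb, of x] by (simp add: add_diff_inverse_ennreal)
  have mb: "Iq p w b \<in> borel_measurable lborel" and mh: "Iq p w h \<in> borel_measurable lborel"
    using meas_Iq[OF w0] by auto
  have md: "(\<lambda>x. Iq p w b x - Iq p w h x) \<in> borel_measurable lborel" using mb mh by measurable
  have "Gq p w b = (\<integral>\<^sup>+x. (Iq p w h x + (Iq p w b x - Iq p w h x)) \<partial>lborel)"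
    unfolding Gq_def by (intro nn_integral_cong) (rule split)
  also have "\<dots> = Gq p w h + (\<integral>\<^sup>+x. (Iq p w b x - Iq p w h x) \<partial>lborel)"
    unfolding Gq_def by (rule nn_integral_add[OF mh md])
  finally have eq: "Gq p w b = Gq p w h + (\<integral>\<^sup>+x. (Iq p w b x - Iq p w h x) \<partial>lborel)" .
  have hfin: "Gq p w h \<noteq> \<infinity>"
    using lpw_mono[OF w0 p hb] fin GP[OF w0 wd] by (metis less_le_trans less_top top.not_eq_extremum not_le)
  have "Gq p w h + (\<integral>\<^sup>+x. (Iq p w b x - Iq p w h x) \<partial>lborel) \<le> Gq p w h + ennreal \<eta>"
    using eq le GP[OF w0 wd] by simp
  then show ?thesis using hfin by (simp add: ennreal_add_left_cancel_le)
qed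

lemma lev_trunc:
  assumes "0 < x" "0 < p"
  shows "{k. x < \<bar>trunc_seq j a k\<bar> powr p} = {k\<in>{k. x < \<bar>a k\<bar> powr p}. k < j}"
  using assms unfolding trunc_seq_def by auto

lemma lev_tail:
  assumes fin: "finite {k. x < \<bar>a k\<bar> powr p}"
  shows "finite {k. x < \<bar>tail_seq n a k\<bar> powr p} \<and>
         card {k. x < \<bar>tail_seq n a k\<bar> powr p} = card {k\<in>{k. x < \<bar>a k\<bar> powr p}. n \<le> k}"
proof -
  have img: "(\<lambda>k. k + n) ` {k. x < \<bar>tail_seq n a k\<bar> powr p} = {k\<in>{k. x < \<bar>a k\<bar> powr p}. n \<le> k}"
  proof
    show "(\<lambda>k. k + n) ` {k. x < \<bar>tail_seq n a k\<bar> powr p} \<subseteq> {k\<in>{k. x < \<bar>a k\<bar> powr p}. n \<le> k}"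
      unfolding tail_seq_def by auto
    show "{k\<in>{k. x < \<bar>a k\<bar> powr p}. n \<le> k} \<subseteq> (\<lambda>k. k + n) ` {k. x < \<bar>tail_seq n a k\<bar> powr p}"
    proof
      fix k assume k: "k \<in> {k\<in>{k. x < \<bar>a k\<bar> powr p}. n \<le> k}"
      then have "k - n \<in> {k. x < \<bar>tail_seq n a k\<bar> powr p}" unfolding tail_seq_def by auto
      moreover have "k = (k - n) + n" using k by auto
      ultimately show "k \<in> (\<lambda>k. k + n) ` {k. x < \<bar>tail_seq n a k\<bar> powr p}" by blast
    qed
  qed
  have inj: "inj_on (\<lambda>k::nat. k + n) X" for X by (simp add: inj_on_def)
  have f2: "finite {k\<in>{k. x < \<bar>a k\<bar> powr p}. n \<le> k}" using fin by simp
  have f1: "finite {k. x < \<bar>tail_seq n a k\<bar> powr p}"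
    using f2 img inj by (metis finite_imageD)
  show ?thesis using f1 card_image[OF inj] img by metis
qed

lemma pointwise:
  fixes a :: "nat \<Rightarrow> real"
  assumes w0: "\<forall>i. 0 \<le> w i" and wd: "decseq w" and w1: "\<forall>i. w i \<le> 1" and p0: "0 < p"
    and finx: "\<forall>x>0. finite {k. x < \<bar>a k\<bar> powr p}"
    and n1: "i1 \<le> n" and n2: "i2 \<le> n"
    and lvl: "card {k. l0 < \<bar>a k\<bar> powr p} \<le> M" and c0: "0 < w M" and l0: "0 < l0"
  shows "Iq p w (tail_seq n a) x \<le> (Iq p w a x - Iq p w (trunc_seq i1 a) x)
      + ennreal (Wf w i1) * indicator {0<..<l0} x
      + ennreal (1 / w M) * (Iq p w a x - Iq p w (trunc_seq i2 a) x)"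
proof (cases "0 < x")
  case False
  then show ?thesis unfolding Iq_def by simp
next
  case True
  define Sa where "Sa = {k. x < \<bar>a k\<bar> powr p}"
  have fSa: "finite Sa" using finx True Sa_def by simp
  define X where "X = card Sa"
  define A1 where "A1 = card {k\<in>Sa. k < i1}"
  define A2 where "A2 = card {k\<in>Sa. k < i2}"
  define T where "T = card {k\<in>Sa. n \<le> k}"
  have lt: "finite {k. x < \<bar>tail_seq n a k\<bar> powr p} \<and> card {k. x < \<bar>tail_seq n a k\<bar> powr p} = T"
    using lev_tail[of x a p n] fSa unfolding Sa_def T_def by simp
  have It: "Iq p w (tail_seq n a) x = ennreal (Wf w T)"
    using Iq_fin[OF w0 True] lt by metis
  have Ia: "Iq p w a x = ennreal (Wf w X)"
    using Iq_fin[OF w0 True] fSa unfolding X_def Sa_def by metis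
  have I1: "Iq p w (trunc_seq i1 a) x = ennreal (Wf w A1)"
    using Iq_fin[OF w0 True, of "trunc_seq i1 a"] fSa lev_trunc[OF True p0, of i1 a]
    unfolding A1_def Sa_def by simp
  have I2: "Iq p w (trunc_seq i2 a) x = ennreal (Wf w A2)"
    using Iq_fin[OF w0 True, of "trunc_seq i2 a"] fSa lev_trunc[OF True p0, of i2 a]
    unfolding A2_def Sa_def by simp
  have disj: "A + T \<le> X" if "A = card {k\<in>Sa. k < j}" "j \<le> n" for A j
  proof -
    have "{k\<in>Sa. k < j} \<inter> {k\<in>Sa. n \<le> k} = {}" using that by auto
    then have "card ({k\<in>Sa. k < j} \<union> {k\<in>Sa. n \<le> k}) = A + T"
      using fSa that T_def by (simp add: card_Un_disjoint)
    moreover have "card ({k\<in>Sa. k < j} \<union> {k\<in>Sa. n \<le> k}) \<le> X"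
      unfolding X_def using fSa by (intro card_mono) auto
    ultimately show ?thesis by simp
  qed
  have d1: "A1 + T \<le> X" using disj[OF A1_def n1] .
  have d2: "A2 + T \<le> X" using disj[OF A2_def n2] .
  have A1i: "A1 \<le> i1"
  proof -
    have "card {k\<in>Sa. k < i1} \<le> card {..<i1}" by (intro card_mono) auto
    then show ?thesis unfolding A1_def by simp
  qed
  have Wm: "\<And>m m'. m \<le> m' \<Longrightarrow> Wf w m \<le> Wf w m'" using Wf_mono[OF w0] by blast
  have W0: "\<And>m. 0 \<le> Wf w m" using Wf_nonneg[OF w0] by blast
  define R where "R = (Wf w X - Wf w A1) + Wf w i1 * indicator {0<..<l0} x + (1 / w M) * (Wf w X - Wf w A2)"
  have e1: "0 \<le> Wf w X - Wf w A1" and e2: "0 \<le> Wf w X - Wf w A2" using Wm d1 d2 by auto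
  have key: "Wf w T \<le> R"
  proof (cases "x < l0")
    case True
    then have "R = (Wf w X - Wf w A1) + Wf w i1 + (1 / w M) * (Wf w X - Wf w A2)"
      unfolding R_def using \<open>0 < x\<close> by (simp add: indicator_def)
    moreover have "Wf w T \<le> Wf w X" using Wm d1 by simp
    moreover have "Wf w A1 \<le> Wf w i1" using Wm A1i by simp
    moreover have "0 \<le> (1 / w M) * (Wf w X - Wf w A2)" using c0 e2 by simp
    ultimately show ?thesis by linarith
  next
    case False
    have "Sa \<subseteq> {k. l0 < \<bar>a k\<bar> powr p}" unfolding Sa_def using False by auto
    then have "X \<le> card {k. l0 < \<bar>a k\<bar> powr p}" unfolding X_def
      using finx l0 by (intro card_mono) auto
    then have XM: "X \<le> M" using lvl by simp
    have "Wf w (A2 + T) = Wf w A2 + (\<Sum>k<T. w (A2 + k))" by (rule Wf_add)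
    moreover have "(\<Sum>k<T. w M) \<le> (\<Sum>k<T. w (A2 + k))"
    proof (rule sum_mono)
      fix k assume "k \<in> {..<T}"
      then have "A2 + k \<le> M" using d2 XM by simp
      then show "w M \<le> w (A2 + k)" using wd by (simp add: decseq_def)
    qed
    moreover have "Wf w (A2 + T) \<le> Wf w X" using Wm d2 by simp
    ultimately have "real T * w M \<le> Wf w X - Wf w A2" by simp
    then have "real T \<le> (1 / w M) * (Wf w X - Wf w A2)" using c0 by (simp add: field_simps)
    moreover have "Wf w T \<le> real T"
    proof -
      have "Wf w T \<le> (\<Sum>k<T. 1)" unfolding Wf_def using w1 by (intro sum_mono) auto
      then show ?thesis by simp
    qed
    moreover have "0 \<le> Wf w i1 * indicator {0<..<l0} x" using W0 by simp
    ultimately show ?thesis unfolding R_def using e1 by linarith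
  qed
  have "Iq p w (tail_seq n a) x = ennreal (Wf w T)" by (rule It)
  also have "\<dots> \<le> ennreal R" using key by (rule ennreal_leI)
  also have "\<dots> = ennreal (Wf w X - Wf w A1) + ennreal (Wf w i1 * indicator {0<..<l0} x)
      + ennreal ((1 / w M) * (Wf w X - Wf w A2))"
    unfolding R_def using e1 e2 W0 c0 by (simp add: ennreal_plus)
  also have "\<dots> = (Iq p w a x - Iq p w (trunc_seq i1 a) x)
      + ennreal (Wf w i1) * indicator {0<..<l0} x
      + ennreal (1 / w M) * (Iq p w a x - Iq p w (trunc_seq i2 a) x)"
  proof -
    have em: "ennreal ((Wf w X - Wf w A2) / w M) = ennreal (1 / w M) * ennreal (Wf w X - Wf w A2)"
      using ennreal_mult[of "1 / w M" "Wf w X - Wf w A2"] c0 e2 by simp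
    show ?thesis unfolding Ia I1 I2 using W0 c0 em
      by (simp add: ennreal_minus indicator_def)
  qed
  finally show ?thesis .
qed


theorem mainTheorem13:
  fixes p :: real and w :: "nat \<Rightarrow> real" and A :: "(nat \<Rightarrow> real) set"
  assumes "1 \<le> p" and "weight_seq w" and "A \<subseteq> Lpw p w"
    and "\<exists>C. \<forall>a\<in>A. lpw_norm p w a \<le> C"
    and "equinormed p w A"
  shows "\<forall>\<epsilon>>0. \<exists>N. \<forall>a\<in>A. \<forall>i\<ge>N. lpw_norm p w (tail_seq i a) powr p < \<epsilon>"
proof (intro allI impI)
  fix \<epsilon> :: real assume \<epsilon>: "0 < \<epsilon>"
  have p0: "0 < p" using assms(1) by simp
  have ws: "(\<forall>i. w i > 0) \<and> w 0 = 1 \<and> decseq w \<and> w \<longlonglongrightarrow> 0 \<and> \<not> summable w"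
    using assms(2) unfolding weight_seq_def .
  have wpos: "\<forall>i. 0 < w i" using ws by blast
  have w00: "w 0 = 1" using ws by blast
  have wd: "decseq w" using ws by blast
  have ns: "\<not> summable w" using ws by blast
  have w0: "\<forall>i. 0 \<le> w i" using wpos less_imp_le by blast
  have w1: "\<forall>i. w i \<le> 1" using wd w00 unfolding decseq_def by (metis zero_le)
  obtain C where bd: "\<forall>a\<in>A. lpw_norm p w a \<le> C" using assms(4) by blast
  define B where "B = max C 0 powr p"
  have B0: "0 \<le> B" by (simp add: B_def)
  have PB: "\<forall>a\<in>A. lpw_pow p w a \<le> ennreal B"
  proof
    fix a assume aA: "a \<in> A"
    have fin: "lpw_pow p w a < \<infinity>" using aA assms(3) unfolding Lpw_def by auto
    have "lpw_norm p w a \<le> max C 0" using bd aA by fastforce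
    moreover have "0 \<le> lpw_norm p w a" by (simp add: lpw_norm_def)
    ultimately have "lpw_norm p w a powr p \<le> max C 0 powr p" using p0 by (intro powr_mono2) auto
    then have "enn2real (lpw_pow p w a) \<le> B" using norm_pow[OF p0] B_def by simp
    then show "lpw_pow p w a \<le> ennreal B" using fin by (intro enn2real_le) auto
  qed
  have e4: "0 < \<epsilon> / 4" using \<epsilon> by simp
  obtain i1 where i1: "\<forall>a\<in>A. lpw_pow p w a \<le> lpw_pow p w (trunc_seq i1 a) + ennreal (\<epsilon> / 4)"
    using equi_pow[OF assms(1) w0 assms(3) bd assms(5) e4] by blast
  define l0 where "l0 = \<epsilon> / (4 * (Wf w i1 + 1))"
  have W0: "0 \<le> Wf w i1" by (rule Wf_nonneg[OF w0])
  have l0p: "0 < l0" unfolding l0_def using \<epsilon> W0 by simp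
  have lvlM: "\<exists>M. B < l * Wf w (Suc M)" if "0 < l" for l
  proof -
    obtain M where M: "B / l < Wf w M" using Wf_unbounded[OF w0 ns] by blast
    have "B < l * Wf w M" using M that by (simp add: field_simps)
    also have "\<dots> \<le> l * Wf w (Suc M)" using Wf_mono[OF w0, of M "Suc M"] that by simp
    finally show ?thesis by blast
  qed
  obtain M where MS: "B < l0 * Wf w (Suc M)" using lvlM[OF l0p] by blast
  have lvl: "card {k. l0 < \<bar>a k\<bar> powr p} \<le> M" if aA: "a \<in> A" for a
  proof -
    have "lpw_pow p w a \<le> ennreal B" using PB aA by blast
    from conjunct2[OF level_bound[OF w0 l0p this B0 MS]] show ?thesis .
  qed
  have finx: "\<forall>x>0. finite {k. x < \<bar>a k\<bar> powr p}" if aA: "a \<in> A" for a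
  proof (intro allI impI)
    fix x :: real assume x: "0 < x"
    obtain M' where M': "B < x * Wf w (Suc M')" using lvlM[OF x] by blast
    have PBa: "lpw_pow p w a \<le> ennreal B" using PB aA by blast
    show "finite {k. x < \<bar>a k\<bar> powr p}"
      by (rule conjunct1[OF level_bound[OF w0 x PBa B0 M']])
  qed
  define c where "c = w M"
  have c0: "0 < c" using wpos c_def by simp
  have ec: "0 < \<epsilon> * c / 4" using \<epsilon> c0 by simp
  obtain i2 where i2: "\<forall>a\<in>A. lpw_pow p w a \<le> lpw_pow p w (trunc_seq i2 a) + ennreal (\<epsilon> * c / 4)"
    using equi_pow[OF assms(1) w0 assms(3) bd assms(5) ec] by blast
  show "\<exists>N. \<forall>a\<in>A. \<forall>i\<ge>N. lpw_norm p w (tail_seq i a) powr p < \<epsilon>"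
  proof (intro exI[of _ "max i1 i2"] ballI allI impI)
    fix a n assume aA: "a \<in> A" and nN: "max i1 i2 \<le> n"
    have fin: "lpw_pow p w a < \<infinity>" using aA assms(3) unfolding Lpw_def by auto
    define D1 where "D1 = (\<lambda>x. Iq p w a x - Iq p w (trunc_seq i1 a) x)"
    define D2 where "D2 = (\<lambda>x. Iq p w a x - Iq p w (trunc_seq i2 a) x)"
    define E where "E = (\<lambda>x. ennreal (Wf w i1) * indicator {0<..<l0} x)"
    have pp: "0 \<le> p" using p0 by simp
    have h1: "lpw_pow p w a \<le> lpw_pow p w (trunc_seq i1 a) + ennreal (\<epsilon> / 4)" using i1 aA by blast
    have h2: "lpw_pow p w a \<le> lpw_pow p w (trunc_seq i2 a) + ennreal (\<epsilon> * c / 4)" using i2 aA by blast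
    have int1: "integral\<^sup>N lborel D1 \<le> ennreal (\<epsilon> / 4)"
      unfolding D1_def by (rule gap_int[OF w0 wd pp trunc_le h1 fin])
    have int2: "integral\<^sup>N lborel D2 \<le> ennreal (\<epsilon> * c / 4)"
      unfolding D2_def by (rule gap_int[OF w0 wd pp trunc_le h2 fin])
    have intE: "integral\<^sup>N lborel E = ennreal (l0 * Wf w i1)"
      unfolding E_def by (rule ind_integral[OF W0 less_imp_le[OF l0p]])
    have mIa: "Iq p w a \<in> borel_measurable lborel" by (rule meas_Iq[OF w0])
    have mI1: "Iq p w (trunc_seq i1 a) \<in> borel_measurable lborel" by (rule meas_Iq[OF w0])
    have mI2: "Iq p w (trunc_seq i2 a) \<in> borel_measurable lborel" by (rule meas_Iq[OF w0])
    have mD1: "D1 \<in> borel_measurable lborel" unfolding D1_def using mIa mI1 by measurable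
    have mD2: "D2 \<in> borel_measurable lborel" unfolding D2_def using mIa mI2 by measurable
    have mE: "E \<in> borel_measurable lborel" unfolding E_def by measurable
    have pw: "Iq p w (tail_seq n a) x \<le> D1 x + E x + ennreal (1 / c) * D2 x" for x
    proof -
      have n1: "i1 \<le> n" and n2: "i2 \<le> n" using nN by auto
      have c0': "0 < w M" using c0 c_def by simp
      show ?thesis unfolding D1_def D2_def E_def c_def
        by (rule pointwise[OF w0 wd w1 p0 finx[OF aA] n1 n2 lvl[OF aA] c0' l0p])
    qed
    have "lpw_pow p w (tail_seq n a) = Gq p w (tail_seq n a)" using GP[OF w0 wd] by simp
    also have "\<dots> \<le> (\<integral>\<^sup>+x. (D1 x + E x + ennreal (1 / c) * D2 x) \<partial>lborel)"
      unfolding Gq_def by (rule nn_integral_mono) (rule pw)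
    also have "\<dots> = integral\<^sup>N lborel D1 + integral\<^sup>N lborel E + ennreal (1 / c) * integral\<^sup>N lborel D2"
    proof -
      have "(\<integral>\<^sup>+x. (D1 x + E x + ennreal (1 / c) * D2 x) \<partial>lborel)
          = (\<integral>\<^sup>+x. (D1 x + E x) \<partial>lborel) + (\<integral>\<^sup>+x. ennreal (1 / c) * D2 x \<partial>lborel)"
        by (rule nn_integral_add) (use mD1 mE mD2 in auto)
      also have "(\<integral>\<^sup>+x. (D1 x + E x) \<partial>lborel) = integral\<^sup>N lborel D1 + integral\<^sup>N lborel E"
        by (rule nn_integral_add[OF mD1 mE])
      also have "(\<integral>\<^sup>+x. ennreal (1 / c) * D2 x \<partial>lborel) = ennreal (1 / c) * integral\<^sup>N lborel D2"
        by (rule nn_integral_cmult[OF mD2])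
      finally show ?thesis .
    qed
    also have "\<dots> \<le> ennreal (\<epsilon> / 4) + ennreal (l0 * Wf w i1) + ennreal (1 / c) * ennreal (\<epsilon> * c / 4)"
      using int1 int2 intE by (intro add_mono mult_left_mono) auto
    also have "\<dots> = ennreal (\<epsilon> / 4 + l0 * Wf w i1 + \<epsilon> / 4)"
    proof -
      have a0: "ennreal (1 / c) * ennreal (\<epsilon> * c / 4) = ennreal (\<epsilon> / 4)"
        using ennreal_mult[of "1 / c" "\<epsilon> * c / 4"] c0 \<epsilon> by simp
      have a1: "ennreal (\<epsilon> / 4 + l0 * Wf w i1) = ennreal (\<epsilon> / 4) + ennreal (l0 * Wf w i1)"
        using \<epsilon> l0p W0 by (intro ennreal_plus) auto
      have a2: "ennreal (\<epsilon> / 4 + l0 * Wf w i1 + \<epsilon> / 4) = ennreal (\<epsilon> / 4 + l0 * Wf w i1) + ennreal (\<epsilon> / 4)"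
        using \<epsilon> l0p W0 by (intro ennreal_plus) auto
      show ?thesis by (simp only: a0 a1 a2)
    qed
    also have "\<dots> < ennreal \<epsilon>"
    proof -
      have nz: "Wf w i1 + 1 \<noteq> 0" using W0 by simp
      have b1: "l0 * (Wf w i1 + 1) = \<epsilon> / 4" unfolding l0_def using nz by (simp add: field_simps)
      have b2: "l0 * Wf w i1 < l0 * (Wf w i1 + 1)" using l0p by simp
      have b3: "l0 * Wf w i1 < \<epsilon> / 4" using b2 unfolding b1 .
      have "\<epsilon> / 4 + l0 * Wf w i1 + \<epsilon> / 4 < \<epsilon>" using b3 \<epsilon> by linarith
      then show ?thesis using \<epsilon> by (intro ennreal_lessI) auto
    qed
    finally have lt: "lpw_pow p w (tail_seq n a) < ennreal \<epsilon>" .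
    have tfin: "lpw_pow p w (tail_seq n a) \<noteq> \<infinity>" using lt by auto
    have "ennreal (enn2real (lpw_pow p w (tail_seq n a))) < ennreal \<epsilon>" using lt tfin by (simp add: ennreal_enn2real_if)
    then have "enn2real (lpw_pow p w (tail_seq n a)) < \<epsilon>"
      using ennreal_less_iff[OF enn2real_nonneg] by blast
    then show "lpw_norm p w (tail_seq n a) powr p < \<epsilon>" using norm_pow[OF p0] by simp
  qed
qed


end
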